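(* Let $p$ be a permutation of length $t\ge 1$. For $k\ge 0$ and $m\ge 0$ let $A_{k,m}$ be the number of permutations in $\mathcal{S}_k$ that contain exactly $m$ occurrences of $p$ as a classical pattern (with $A_{0,0}=1$ and $A_{0,m}=0$ for $m\ge 1$). For $N\ge 1$, an occurrence of the place-difference-value pattern $P=(p,(\mathbb{O},\mathbb{E},\ldots,\mathbb{E}),\emptyset,(\mathbb{E},\ldots,\mathbb{E}))$ in $\pi=\pi_1\cdots\pi_N\in\mathcal{S}_N$ is a sequence of indices $i_1<\cdots<i_t$ such that every $i_j$ is odd, every value $\pi_{i_j}$ is even, and $\pi_{i_1}\cdots\pi_{i_t}$ is order isomorphic to $p$. Let $B_{N,m}$ be the number of permutations in $\mathcal{S}_N$ with exactly $m$ occurrences of $P$. Then for all $n\ge 1$ and $m\ge 0$, $$B_{2n,m}=\sum_{k=0}^{n} n!\,(n-k)!\binom{n}{k}^{3}A_{k,m}.$$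
   Context: $\mathcal{S}_n$ denotes the set of permutations of $\{1,\dots,n\}$, written as words $\pi_1\cdots\pi_n$. $\mathbb{E}$ and $\mathbb{O}$ denote the even and odd numbers. A permutation $\sigma$ occurs (as a classical pattern) in $\pi$ at indices $i_1<\dots<i_t$ if $\pi_{i_1}\cdots\pi_{i_t}$ is order isomorphic to $\sigma$; the number of occurrences is the number of such index sequences. In the place-difference-value language, $P$ has place sets $X_0=\mathbb{O}$ (so $i_1$ is odd) and $X_j=\mathbb{E}$ for $j\ge1$ (consecutive chosen positions, and $i_t$ and $N+1$, differ by an even number), no difference conditions, and value sets all equal to $\mathbb{E}$. *)

theory Defs
  imports Main
begin

text \<open>Permutations of {1..n}, written as words (lists); position i (1-based) holds xs ! (i-1).\<close>
definition perms :: "nat \<Rightarrow> nat list set" where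
  "perms n = {xs. distinct xs \<and> set xs = {1..n}}"

definition order_iso :: "nat list \<Rightarrow> nat list \<Rightarrow> bool" where
  "order_iso u v \<longleftrightarrow> length u = length v \<and>
     (\<forall>a<length u. \<forall>b<length u. (u ! a < u ! b) = (v ! a < v ! b))"

definition occ :: "nat list \<Rightarrow> nat list \<Rightarrow> nat list set" where
  "occ p \<pi> = {is. length is = length p \<and> sorted_wrt (<) is \<and> set is \<subseteq> {1..length \<pi>} \<and>
                  order_iso (map (\<lambda>i. \<pi> ! (i - 1)) is) p}"

definition pdv_occ :: "nat list \<Rightarrow> nat list \<Rightarrow> nat list set" where
  "pdv_occ p \<pi> = {is \<in> occ p \<pi>. \<forall>i\<in>set is. odd i \<and> even (\<pi> ! (i - 1))}"

definition A_count :: "nat list \<Rightarrow> nat \<Rightarrow> nat \<Rightarrow> nat" where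
  "A_count p k m = card {\<pi> \<in> perms k. card (occ p \<pi>) = m}"

definition B_count :: "nat list \<Rightarrow> nat \<Rightarrow> nat \<Rightarrow> nat" where
  "B_count p N m = card {\<pi> \<in> perms N. card (pdv_occ p \<pi>) = m}"

end

theory Submission
  imports Defs "HOL-Combinatorics.Multiset_Permutations"
begin


definition rank :: "nat set \<Rightarrow> nat \<Rightarrow> nat" where
  "rank S x = card {y\<in>S. y \<le> x}"

definition std :: "nat list \<Rightarrow> nat list" where
  "std w = map (rank (set w)) w"

lemma rank_less:
  assumes "finite S" "x' \<in> S" "x < x'"
  shows "rank S x < rank S x'"
  unfolding rank_def
proof (rule psubset_card_mono)
  show "finite {y \<in> S. y \<le> x'}" using assms by auto
  have "x' \<notin> {y\<in>S. y \<le> x}" using assms by auto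
  moreover have "x' \<in> {y\<in>S. y \<le> x'}" using assms by auto
  moreover have "{y \<in> S. y \<le> x} \<subseteq> {y \<in> S. y \<le> x'}" using assms by auto
  ultimately show "{y \<in> S. y \<le> x} \<subset> {y \<in> S. y \<le> x'}" by blast
qed

lemma rank_less_iff:
  assumes "finite S" "x \<in> S" "x' \<in> S"
  shows "rank S x < rank S x' \<longleftrightarrow> x < x'"
  using rank_less[OF assms(1)] assms
  by (metis linorder_neq_iff order_less_asym)

lemma rank_inj: "finite S \<Longrightarrow> inj_on (rank S) S"
proof (rule inj_onI)
  fix x y assume "finite S" "x \<in> S" "y \<in> S" "rank S x = rank S y"
  then show "x = y" using rank_less[of S] by (metis linorder_neq_iff less_irrefl)
qed

lemma rank_range:
  assumes "finite S" "x \<in> S"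
  shows "rank S x \<in> {1..card S}"
proof -
  have "{y\<in>S. y \<le> x} \<noteq> {}" using assms by auto
  moreover have "finite {y\<in>S. y \<le> x}" using assms by auto
  ultimately have "rank S x \<ge> 1" unfolding rank_def
    by (simp add: Suc_leI card_gt_0_iff)
  moreover have "rank S x \<le> card S" unfolding rank_def
    by (rule card_mono) (use assms in auto)
  ultimately show ?thesis by auto
qed

lemma std_perm:
  assumes "distinct w"
  shows "std w \<in> perms (length w)"
proof -
  have d: "distinct (std w)" unfolding std_def
    using assms rank_inj[of "set w"] by (simp add: distinct_map)
  have s: "set (std w) \<subseteq> {1..length w}" unfolding std_def
    using rank_range[of "set w"] assms by (auto simp: distinct_card)
  have "card (set (std w)) = card {1..length w}"
    using d distinct_card[OF d] by (simp add: std_def)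
  then have "set (std w) = {1..length w}"
    using s by (simp add: card_subset_eq)
  then show ?thesis using d unfolding perms_def by auto
qed

lemma std_iso:
  assumes "distinct w"
  shows "order_iso w (std w)"
  unfolding order_iso_def std_def
  using rank_less_iff[of "set w"] by auto

lemma occ_iso:
  assumes "order_iso u v"
  shows "occ p u = occ p v"
proof -
  have len: "length u = length v" using assms unfolding order_iso_def by auto
  have "order_iso (map (\<lambda>i. u ! (i - 1)) is) p = order_iso (map (\<lambda>i. v ! (i - 1)) is) p"
    if "set is \<subseteq> {1..length u}" for "is"
  proof -
    have "\<And>a. a < length is \<Longrightarrow> is ! a - 1 < length u"
      using that by (meson atLeastAtMost_iff diff_less less_le_trans nth_mem subsetD zero_less_one le_simps(3))
    then have "\<And>a b. a < length is \<Longrightarrow> b < length is \<Longrightarrow>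
        (u ! (is ! a - 1) < u ! (is ! b - 1)) = (v ! (is ! a - 1) < v ! (is ! b - 1))"
      using assms unfolding order_iso_def by auto
    then show ?thesis unfolding order_iso_def by auto
  qed
  then show ?thesis unfolding occ_def using len by auto
qed

lemma std_inj:
  assumes "distinct w" "distinct w'" "set w = set w'" "std w = std w'"
  shows "w = w'"
proof -
  have len: "length w = length w'" using assms(4) unfolding std_def
    by (metis length_map)
  show ?thesis
  proof (rule nth_equalityI[OF len])
    fix i assume i: "i < length w"
    have "rank (set w) (w ! i) = rank (set w) (w' ! i)"
      using assms(3,4) i len unfolding std_def by (metis nth_map)
    then show "w ! i = w' ! i"
      using rank_inj[of "set w"] i len assms(3)
      by (metis finite_set inj_on_eq_iff nth_mem)
  qed
qed



lemma perms_eq: "perms k = permutations_of_set {1..k}"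
  unfolding perms_def permutations_of_set_def by auto

lemma card_perms: "card (perms k) = fact k"
  by (simp add: perms_eq)

lemma prod_eq_binom:
  assumes "k \<le> n"
  shows "\<Prod>{n - k + 1..n} = (n choose k) * fact k"
proof -
  have "fact n = fact (n - k) * \<Prod>{Suc (n - k)..n}"
    using fact_eq_fact_times[of "n - k" n] by simp
  moreover have "fact k * fact (n - k) * (n choose k) = (fact n :: nat)"
    using binomial_fact_lemma[OF assms] .
  ultimately have "fact (n - k) * \<Prod>{n - k + 1..n} = fact (n - k) * ((n choose k) * fact k)"
    by (simp add: algebra_simps)
  then show ?thesis by simp
qed

lemma W_fiber:
  assumes "finite Ev" "card Ev = n" "\<sigma> \<in> perms k" "k \<le> n"
  shows "card {w. length w = k \<and> distinct w \<and> set w \<subseteq> Ev \<and> std w = \<sigma>} = n choose k"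
proof -
  define W where "W = {w. length w = k \<and> distinct w \<and> set w \<subseteq> Ev}"
  define \<Phi> where "\<Phi> = (\<lambda>w. (set w, std w))"
  define T where "T = {Y. Y \<subseteq> Ev \<and> card Y = k} \<times> perms k"
  have inj: "inj_on \<Phi> W"
    by (rule inj_onI) (auto simp: \<Phi>_def W_def intro: std_inj)
  have sub: "\<Phi> ` W \<subseteq> T"
    using std_perm by (auto simp: \<Phi>_def W_def T_def distinct_card)
  have finT: "finite T" unfolding T_def perms_eq using assms(1)
    by (auto intro: finite_cartesian_product)
  have "card W = \<Prod>{n - k + 1..n}"
    unfolding W_def using card_lists_distinct_length_eq[of Ev k] assms by simp
  also have "\<dots> = card T"
    unfolding T_def using prod_eq_binom[OF assms(4)] n_subsets[OF assms(1), of k] assms(2)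
    by (simp add: card_cartesian_product card_perms)
  finally have "card (\<Phi> ` W) = card T" using card_image[OF inj] by simp
  then have img: "\<Phi> ` W = T" using card_subset_eq[OF finT sub] by simp
  define F where "F = {w\<in>W. std w = \<sigma>}"
  have "\<Phi> ` F = {Y. Y \<subseteq> Ev \<and> card Y = k} \<times> {\<sigma>}"
  proof
    show "\<Phi> ` F \<subseteq> {Y. Y \<subseteq> Ev \<and> card Y = k} \<times> {\<sigma>}"
      using sub unfolding F_def T_def \<Phi>_def by auto
  next
    show "{Y. Y \<subseteq> Ev \<and> card Y = k} \<times> {\<sigma>} \<subseteq> \<Phi> ` F"
    proof
      fix z assume "z \<in> {Y. Y \<subseteq> Ev \<and> card Y = k} \<times> {\<sigma>}"
      then have "z \<in> T" using assms(3) unfolding T_def by auto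
      then obtain w where "w \<in> W" "\<Phi> w = z" using img by blast
      moreover have "snd z = \<sigma>" using \<open>z \<in> _ \<times> {\<sigma>}\<close> by auto
      ultimately show "z \<in> \<Phi> ` F" unfolding F_def \<Phi>_def by force
    qed
  qed
  moreover have "card F = card (\<Phi> ` F)"
    by (rule card_image[symmetric]) (rule inj_on_subset[OF inj], auto simp: F_def)
  ultimately have "card F = n choose k"
    using n_subsets[OF assms(1), of k] assms(2) by (simp add: card_cartesian_product)
  then show ?thesis unfolding F_def W_def by (simp add: conj_assoc)
qed



lemma occ_restrict:
  assumes sp: "sorted_wrt (<) ps" and sub: "set ps \<subseteq> {1..length \<pi>}"
  shows "card {is \<in> occ p \<pi>. set is \<subseteq> set ps} = card (occ p (map (\<lambda>i. \<pi> ! (i - 1)) ps))"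
proof -
  define L where "L = length ps"
  define w where "w = map (\<lambda>i. \<pi> ! (i - 1)) ps"
  define f where "f = (\<lambda>j. ps ! (j - 1))"
  have fmono: "f j < f j'" if "j \<in> {1..L}" "j' \<in> {1..L}" "j < j'" for j j'
    unfolding f_def using sorted_wrt_nth_less[OF sp, of "j - 1" "j' - 1"] that L_def by auto
  have fmono_iff: "f j < f j' \<longleftrightarrow> j < j'" if "j \<in> {1..L}" "j' \<in> {1..L}" for j j'
    using fmono that by (metis linorder_neq_iff order_less_asym)
  have finj: "inj_on f {1..L}"
    by (rule inj_onI) (metis fmono_iff linorder_neq_iff less_irrefl)
  have fimg: "f ` {1..L} = set ps"
  proof
    show "f ` {1..L} \<subseteq> set ps" unfolding f_def L_def by auto
    show "set ps \<subseteq> f ` {1..L}"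
    proof
      fix i assume "i \<in> set ps"
      then obtain j where "j < L" "ps ! j = i" unfolding L_def by (auto simp: in_set_conv_nth)
      then show "i \<in> f ` {1..L}" unfolding f_def by (intro image_eqI[of _ _ "j+1"]) auto
    qed
  qed
  have wnth: "w ! (j - 1) = \<pi> ! (f j - 1)" if "j \<in> {1..L}" for j
    unfolding w_def f_def using that L_def by auto
  define M where "M = map f"
  have "bij_betw M (occ p w) {is \<in> occ p \<pi>. set is \<subseteq> set ps}"
  proof (rule bij_betw_imageI)
    show "inj_on M (occ p w)"
    proof (rule inj_onI)
      fix J J' assume "J \<in> occ p w" "J' \<in> occ p w" "M J = M J'"
      then have "set J \<union> set J' \<subseteq> {1..L}" unfolding occ_def w_def L_def by auto
      then show "J = J'" using \<open>M J = M J'\<close> unfolding M_def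
        by (meson inj_on_map_eq_map inj_on_subset finj)
    qed
    show "M ` occ p w = {is \<in> occ p \<pi>. set is \<subseteq> set ps}"
    proof
      show "M ` occ p w \<subseteq> {is \<in> occ p \<pi>. set is \<subseteq> set ps}"
      proof
        fix x assume "x \<in> M ` occ p w"
        then obtain J where J: "J \<in> occ p w" "x = map f J" unfolding M_def by auto
        have JL: "set J \<subseteq> {1..L}" and Jlen: "length J = length p" and Js: "sorted_wrt (<) J"
          and Jiso: "order_iso (map (\<lambda>j. w ! (j - 1)) J) p"
          using J(1) unfolding occ_def w_def L_def by auto
        have "sorted_wrt (<) (map f J)" unfolding sorted_wrt_map
          using JL by (intro sorted_wrt_mono_rel[OF _ Js]) (meson fmono subsetD)
        moreover have "set (map f J) \<subseteq> set ps" using JL fimg by auto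
        moreover have eq: "map (\<lambda>i. \<pi> ! (i - 1)) (map f J) = map (\<lambda>j. w ! (j - 1)) J"
          using JL wnth by auto
        have "order_iso (map (\<lambda>i. \<pi> ! (i - 1)) (map f J)) p"
          using Jiso by (simp only: eq)
        moreover have "length (map f J) = length p" using Jlen by simp
        ultimately show "x \<in> {is \<in> occ p \<pi>. set is \<subseteq> set ps}"
          using J(2) sub unfolding occ_def by auto
      qed
    next
      show "{is \<in> occ p \<pi>. set is \<subseteq> set ps} \<subseteq> M ` occ p w"
      proof
        fix "is" assume "is \<in> {is \<in> occ p \<pi>. set is \<subseteq> set ps}"
        then have isp: "set is \<subseteq> set ps" and islen: "length is = length p"
          and iss: "sorted_wrt (<) is" and isiso: "order_iso (map (\<lambda>i. \<pi> ! (i - 1)) is) p"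
          unfolding occ_def by auto
        define g where "g = the_inv_into {1..L} f"
        have gf: "f (g i) = i" "g i \<in> {1..L}" if "i \<in> set ps" for i
        proof -
          have "i \<in> f ` {1..L}" using that fimg by auto
          then show "f (g i) = i" "g i \<in> {1..L}"
            using f_the_inv_into_f[OF finj] the_inv_into_into[OF finj, of i "{1..L}"]
            unfolding g_def by auto
        qed
        have gmono: "g i < g i'" if "i \<in> set ps" "i' \<in> set ps" "i < i'" for i i'
          using fmono_iff[of "g i" "g i'"] gf that by auto
        define J where "J = map g is"
        have "map f J = is" unfolding J_def map_map
          by (rule map_idI) (use isp gf in auto)
        moreover have "J \<in> occ p w"
        proof -
          have "sorted_wrt (<) J" unfolding J_def sorted_wrt_map
            using isp by (intro sorted_wrt_mono_rel[OF _ iss]) (meson gmono subsetD)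
          moreover have "set J \<subseteq> {1..length w}" using gf isp unfolding J_def w_def L_def by auto
          moreover have eq: "map (\<lambda>j. w ! (j - 1)) J = map (\<lambda>i. \<pi> ! (i - 1)) is"
            unfolding J_def using isp gf wnth by auto
          have "order_iso (map (\<lambda>j. w ! (j - 1)) J) p" using isiso by (simp only: eq)
          moreover have "length J = length p" using islen J_def by simp
          ultimately show ?thesis unfolding occ_def by auto
        qed
        ultimately show "is \<in> M ` occ p w" unfolding M_def by auto
      qed
    qed
  qed
  then show ?thesis unfolding w_def by (simp add: bij_betw_same_card)
qed



fun ff :: "nat \<Rightarrow> nat \<Rightarrow> nat" where
  "ff c 0 = 1"
| "ff c (Suc j) = c * ff (c - 1) j"

lemma ff_fact: "j \<le> c \<Longrightarrow> ff c j * fact (c - j) = fact c"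
proof (induction j arbitrary: c)
  case 0 then show ?case by simp
next
  case (Suc j)
  then obtain c' where c: "c = Suc c'" by (cases c) auto
  then have "ff c' j * fact (c' - j) = fact c'" using Suc by simp
  then show ?case using c by (simp add: algebra_simps)
qed

definition SL :: "nat \<Rightarrow> nat list \<Rightarrow> nat set \<Rightarrow> nat list set" where
  "SL L w Od = {a. length a = L \<and> distinct a \<and> set a \<subseteq> set w \<union> Od \<and> filter even a = w}"

lemma SL_finite: "finite Od \<Longrightarrow> finite (SL L w Od)"
  by (rule finite_subset[OF _ finite_lists_length_eq[of "set w \<union> Od" L]]) (auto simp: SL_def)

lemma SL_step:
  assumes "\<forall>x\<in>Od. odd x" "distinct w" "\<forall>x\<in>set w. even x"
  shows "SL (Suc L) w Od = (case w of [] \<Rightarrow> {} | y # w' \<Rightarrow> Cons y ` SL L w' Od)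
           \<union> (\<Union>x\<in>Od. Cons x ` SL L w (Od - {x}))"
proof
  show "SL (Suc L) w Od \<subseteq> (case w of [] \<Rightarrow> {} | y # w' \<Rightarrow> Cons y ` SL L w' Od)
           \<union> (\<Union>x\<in>Od. Cons x ` SL L w (Od - {x}))"
  proof
    fix a assume aS: "a \<in> SL (Suc L) w Od"
    then have pr: "length a = Suc L" "distinct a" "set a \<subseteq> set w \<union> Od" "filter even a = w"
      by (simp_all add: SL_def)
    then obtain x a' where ax: "a = x # a'" by (cases a) auto
    have a: "a = x # a'" "length a' = L" "distinct (x # a')"
      "set (x # a') \<subseteq> set w \<union> Od" "filter even (x # a') = w"
      using pr ax by simp_all
    show "a \<in> (case w of [] \<Rightarrow> {} | y # w' \<Rightarrow> Cons y ` SL L w' Od)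
           \<union> (\<Union>x\<in>Od. Cons x ` SL L w (Od - {x}))"
    proof (cases "even x")
      case True
      then have w: "w = x # filter even a'" using a by simp
      have "set a' \<subseteq> set (filter even a') \<union> Od"
      proof
        fix z assume z: "z \<in> set a'"
        show "z \<in> set (filter even a') \<union> Od"
        proof (cases "even z")
          case True then show ?thesis using z by simp
        next
          case False
          then have "z \<notin> set w" using assms(3) by blast
          moreover have "z \<in> set w \<union> Od" using a(4) z by auto
          ultimately show ?thesis by blast
        qed
      qed
      then have "a' \<in> SL L (filter even a') Od" using a unfolding SL_def by auto
      then show ?thesis using w a by auto
    next
      case False
      then have "x \<in> Od" using a assms by auto
      have "a' \<in> SL L w (Od - {x})" using a False unfolding SL_def by auto
      then show ?thesis using a \<open>x \<in> Od\<close> by auto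
    qed
  qed
next
  show "(case w of [] \<Rightarrow> {} | y # w' \<Rightarrow> Cons y ` SL L w' Od)
           \<union> (\<Union>x\<in>Od. Cons x ` SL L w (Od - {x})) \<subseteq> SL (Suc L) w Od"
  proof
    fix a assume a: "a \<in> (case w of [] \<Rightarrow> {} | y # w' \<Rightarrow> Cons y ` SL L w' Od)
           \<union> (\<Union>x\<in>Od. Cons x ` SL L w (Od - {x}))"
    show "a \<in> SL (Suc L) w Od"
    proof (cases "a \<in> (\<Union>x\<in>Od. Cons x ` SL L w (Od - {x}))")
      case True
      then obtain x a' where "x \<in> Od" "a' \<in> SL L w (Od - {x})" "a = x # a'" by auto
      moreover have "odd x" using \<open>x \<in> Od\<close> assms by auto
      moreover have "x \<notin> set w" using \<open>odd x\<close> assms by auto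
      ultimately show ?thesis unfolding SL_def by auto
    next
      case False
      then obtain y w' where w: "w = y # w'" and "a \<in> Cons y ` SL L w' Od"
        using a by (cases w) auto
      then obtain a' where a': "a' \<in> SL L w' Od" "a = y # a'" by auto
      have "even y" "y \<notin> set w'" using w assms by auto
      moreover have "y \<notin> Od" using \<open>even y\<close> assms by auto
      ultimately have "y \<notin> set a'" using a' unfolding SL_def by auto
      then show ?thesis using a' w \<open>even y\<close> unfolding SL_def by auto
    qed
  qed
qed

lemma SL_card:
  assumes "finite Od" "\<forall>x\<in>Od. odd x" "distinct w" "\<forall>x\<in>set w. even x"
  shows "card (SL L w Od) = (L choose length w) * ff (card Od) (L - length w)"
  using assms
proof (induction L arbitrary: w Od)
  case 0
  show ?case
  proof (cases w)
    case Nil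
    then have "SL 0 w Od = {[]}" unfolding SL_def by auto
    then show ?thesis using Nil by simp
  next
    case (Cons y w')
    then have "SL 0 w Od = {}" unfolding SL_def by auto
    then show ?thesis using Cons by simp
  qed
next
  case (Suc L)
  define A2 where "A2 = (\<Union>x\<in>Od. Cons x ` SL L w (Od - {x}))"
  have cA2: "card A2 = card Od * ((L choose length w) * ff (card Od - 1) (L - length w))"
  proof -
    have "card A2 = (\<Sum>x\<in>Od. card (Cons x ` SL L w (Od - {x})))"
      unfolding A2_def
      by (rule card_UN_disjoint) (use Suc.prems SL_finite in auto)
    also have "\<dots> = (\<Sum>x\<in>Od. (L choose length w) * ff (card Od - 1) (L - length w))"
    proof (rule sum.cong[OF refl])
      fix x assume "x \<in> Od"
      have "card (Cons x ` SL L w (Od - {x})) = card (SL L w (Od - {x}))"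
        by (rule card_image) simp
      also have "\<dots> = (L choose length w) * ff (card (Od - {x})) (L - length w)"
        by (rule Suc.IH) (use Suc.prems in auto)
      finally show "card (Cons x ` SL L w (Od - {x})) = (L choose length w) * ff (card Od - 1) (L - length w)"
        using \<open>x \<in> Od\<close> Suc.prems by simp
    qed
    finally show ?thesis by simp
  qed
  have step: "SL (Suc L) w Od = (case w of [] \<Rightarrow> {} | y # w' \<Rightarrow> Cons y ` SL L w' Od) \<union> A2"
    unfolding A2_def by (rule SL_step) (use Suc.prems in auto)
  show ?case
  proof (cases w)
    case Nil
    then have "SL (Suc L) w Od = A2" using step by simp
    then show ?thesis using cA2 Nil by simp
  next
    case (Cons y w')
    have fin1: "finite (Cons y ` SL L w' Od)" using SL_finite Suc.prems by auto
    have fin2: "finite A2" unfolding A2_def using SL_finite Suc.prems by auto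
    have disj: "Cons y ` SL L w' Od \<inter> A2 = {}"
      unfolding A2_def using Suc.prems Cons by auto
    have c1: "card (Cons y ` SL L w' Od) = (L choose length w') * ff (card Od) (L - length w')"
      using card_image[of "Cons y" "SL L w' Od"] Suc.IH[of Od w'] Suc.prems Cons by simp
    have "card (SL (Suc L) w Od) = card (Cons y ` SL L w' Od) + card A2"
      using step Cons card_Un_disjoint[OF fin1 fin2 disj] by simp
    also have "\<dots> = (Suc L choose length w) * ff (card Od) (Suc L - length w)"
    proof (cases "length w' < L")
      case True
      then have "ff (card Od) (L - length w') = card Od * ff (card Od - 1) (L - Suc (length w'))"
        by (metis Suc_diff_Suc ff.simps(2))
      then show ?thesis using c1 cA2 Cons True by (simp add: algebra_simps)
    next
      case False
      then show ?thesis using c1 cA2 Cons by simp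
    qed
    finally show ?thesis .
  qed
qed



definition aw :: "nat \<Rightarrow> nat list \<Rightarrow> nat list" where
  "aw n \<pi> = map (\<lambda>j. \<pi> ! (2 * j)) [0..<n]"
definition bw :: "nat \<Rightarrow> nat list \<Rightarrow> nat list" where
  "bw n \<pi> = map (\<lambda>j. \<pi> ! (2 * j + 1)) [0..<n]"
definition gl :: "nat \<Rightarrow> nat list \<times> nat list \<Rightarrow> nat list" where
  "gl n ab = map (\<lambda>i. if even i then fst ab ! (i div 2) else snd ab ! (i div 2)) [0..<2 * n]"
definition Aall :: "nat \<Rightarrow> nat list set" where
  "Aall n = {a. length a = n \<and> distinct a \<and> set a \<subseteq> {1..2 * n}}"

lemma perms_len: "\<pi> \<in> perms N \<Longrightarrow> length \<pi> = N"
proof -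
  assume "\<pi> \<in> perms N"
  then have "distinct \<pi>" "set \<pi> = {1..N}" unfolding perms_def by auto
  then have "length \<pi> = card {1..N}" using distinct_card by metis
  then show ?thesis by simp
qed

lemma gl_aw_bw: "\<pi> \<in> perms (2 * n) \<Longrightarrow> gl n (aw n \<pi>, bw n \<pi>) = \<pi>"
proof -
  assume "\<pi> \<in> perms (2 * n)"
  then have len: "length \<pi> = 2 * n" by (rule perms_len)
  show ?thesis
  proof (rule nth_equalityI)
    show "length (gl n (aw n \<pi>, bw n \<pi>)) = length \<pi>" using len by (simp add: gl_def)
    fix i assume "i < length (gl n (aw n \<pi>, bw n \<pi>))"
    then have i: "i < 2 * n" by (simp add: gl_def)
    then have "i div 2 < n" by simp
    have g: "gl n (aw n \<pi>, bw n \<pi>) ! i = (if even i then aw n \<pi> ! (i div 2) else bw n \<pi> ! (i div 2))"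
      using i by (simp add: gl_def)
    show "gl n (aw n \<pi>, bw n \<pi>) ! i = \<pi> ! i"
    proof (cases "even i")
      case True
      then have "2 * (i div 2) = i" by simp
      then show ?thesis using g True \<open>i div 2 < n\<close> by (simp add: aw_def)
    next
      case False
      then have "2 * (i div 2) + 1 = i" by presburger
      then show ?thesis using g False \<open>i div 2 < n\<close> by (simp add: bw_def)
    qed
  qed
qed

lemma aw_gl: "length a = n \<Longrightarrow> aw n (gl n (a, b)) = a"
  by (rule nth_equalityI) (auto simp: aw_def gl_def)

lemma bw_gl: "length b = n \<Longrightarrow> bw n (gl n (a, b)) = b"
  by (rule nth_equalityI) (auto simp: bw_def gl_def)

lemma aw_mem: "\<pi> \<in> perms (2 * n) \<Longrightarrow> aw n \<pi> \<in> Aall n"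
proof -
  assume p: "\<pi> \<in> perms (2 * n)"
  have len: "length \<pi> = 2 * n" using perms_len[OF p] .
  have d: "distinct \<pi>" and s: "set \<pi> = {1..2*n}" using p unfolding perms_def by simp_all
  have "inj_on (\<lambda>j. \<pi> ! (2 * j)) {0..<n}"
  proof (rule inj_onI)
    fix j j' assume "j \<in> {0..<n}" "j' \<in> {0..<n}" "\<pi> ! (2 * j) = \<pi> ! (2 * j')"
    moreover have "2*j < length \<pi>" "2*j' < length \<pi>" using calculation len by simp_all
    ultimately have "2*j = 2*j'" using nth_eq_iff_index_eq[OF d, of "2*j" "2*j'"] by simp
    then show "j = j'" by simp
  qed
  then have "distinct (aw n \<pi>)" unfolding aw_def distinct_map by simp
  moreover have "set (aw n \<pi>) \<subseteq> set \<pi>"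
  proof
    fix x assume "x \<in> set (aw n \<pi>)"
    then obtain j where j: "j < n" "x = \<pi> ! (2*j)" unfolding aw_def by auto
    then have "2*j < length \<pi>" using len by simp
    then show "x \<in> set \<pi>" using j nth_mem by blast
  qed
  then have "set (aw n \<pi>) \<subseteq> {1..2*n}" using s by simp
  moreover have "length (aw n \<pi>) = n" by (simp add: aw_def)
  ultimately show ?thesis unfolding Aall_def by blast
qed

lemma bw_mem: "\<pi> \<in> perms (2 * n) \<Longrightarrow> bw n \<pi> \<in> permutations_of_set ({1..2*n} - set (aw n \<pi>))"
proof -
  assume p: "\<pi> \<in> perms (2 * n)"
  have len: "length \<pi> = 2 * n" using perms_len[OF p] .
  have d: "distinct \<pi>" and s: "set \<pi> = {1..2*n}" using p unfolding perms_def by simp_all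
  have "inj_on (\<lambda>j. \<pi> ! (2 * j + 1)) {0..<n}"
  proof (rule inj_onI)
    fix j j' assume "j \<in> {0..<n}" "j' \<in> {0..<n}" "\<pi> ! (2 * j + 1) = \<pi> ! (2 * j' + 1)"
    moreover have "2*j+1 < length \<pi>" "2*j'+1 < length \<pi>" using calculation len by simp_all
    ultimately have "2*j+1 = 2*j'+1" using nth_eq_iff_index_eq[OF d, of "2*j+1" "2*j'+1"] by simp
    then show "j = j'" by simp
  qed
  then have "distinct (bw n \<pi>)" unfolding bw_def distinct_map by simp
  moreover have "set (bw n \<pi>) = {1..2*n} - set (aw n \<pi>)"
  proof
    show "set (bw n \<pi>) \<subseteq> {1..2*n} - set (aw n \<pi>)"
    proof
      fix x assume "x \<in> set (bw n \<pi>)"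
      then obtain j where j: "j < n" "x = \<pi> ! (2*j+1)" unfolding bw_def by auto
      have "2*j+1 < length \<pi>" using j len by simp
      then have "x \<in> set \<pi>" using j(2) nth_mem by blast
      then have "x \<in> {1..2*n}" using s by simp
      moreover have "x \<notin> set (aw n \<pi>)"
      proof
        assume "x \<in> set (aw n \<pi>)"
        then obtain j' where "j' < n" "x = \<pi> ! (2*j')" unfolding aw_def by auto
        moreover have "2*j' < length \<pi>" "2*j+1 < length \<pi>" using j \<open>j' < n\<close> len by simp_all
        ultimately have "2*j' = 2*j+1" using j(2) nth_eq_iff_index_eq[OF d, of "2*j'" "2*j+1"] by simp
        then show False by presburger
      qed
      ultimately show "x \<in> {1..2*n} - set (aw n \<pi>)" by auto
    qed
    show "{1..2*n} - set (aw n \<pi>) \<subseteq> set (bw n \<pi>)"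
    proof
      fix x assume x: "x \<in> {1..2*n} - set (aw n \<pi>)"
      then have "x \<in> set \<pi>" using s by blast
      then obtain i where i: "i < 2*n" "x = \<pi> ! i" using len by (auto simp: in_set_conv_nth)
      show "x \<in> set (bw n \<pi>)"
      proof (cases "even i")
        case True
        then have "2 * (i div 2) = i" by simp
        then have "x = aw n \<pi> ! (i div 2)" "i div 2 < n" using i by (simp_all add: aw_def)
        then have "x \<in> set (aw n \<pi>)" by (simp add: aw_def)
        then show ?thesis using x by blast
      next
        case False
        then have "2 * (i div 2) + 1 = i" by presburger
        then have "x = bw n \<pi> ! (i div 2)" "i div 2 < n" using i
          by (simp_all add: bw_def)
        then show ?thesis by (simp add: bw_def)
      qed
    qed
  qed
  ultimately show ?thesis by (rule permutations_of_setI[rotated])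
qed

lemma set_gl:
  assumes "length a = n" "length b = n"
  shows "set (gl n (a, b)) = set a \<union> set b"
proof
  show "set (gl n (a, b)) \<subseteq> set a \<union> set b"
    unfolding gl_def using assms by (auto simp: less_mult_imp_div_less)
  show "set a \<union> set b \<subseteq> set (gl n (a, b))"
  proof
    fix x assume "x \<in> set a \<union> set b"
    then consider j where "j < n" "x = a ! j" | j where "j < n" "x = b ! j"
      using assms by (auto simp: in_set_conv_nth)
    then show "x \<in> set (gl n (a, b))"
    proof cases
      case 1
      then show ?thesis unfolding gl_def set_map
        by (intro image_eqI[of _ _ "2*j"]) auto
    next
      case 2
      then show ?thesis unfolding gl_def set_map
        by (intro image_eqI[of _ _ "2*j+1"]) auto
    qed
  qed
qed

lemma gl_mem:
  assumes "a \<in> Aall n" "b \<in> permutations_of_set ({1..2*n} - set a)"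
  shows "gl n (a, b) \<in> perms (2 * n)"
proof -
  have la: "length a = n" "distinct a" "set a \<subseteq> {1..2*n}" using assms(1) by (auto simp: Aall_def)
  have sb: "set b = {1..2*n} - set a" "distinct b" using assms(2) by (auto dest: permutations_of_setD)
  have "card (set b) = 2*n - n" using sb la by (simp add: card_Diff_subset distinct_card)
  then have lb: "length b = n" using sb distinct_card by fastforce
  have s: "set (gl n (a, b)) = {1..2*n}" using set_gl[OF la(1) lb] sb la by auto
  have "length (gl n (a, b)) = 2 * n" by (simp add: gl_def)
  then have "distinct (gl n (a, b))" using s by (intro card_distinct) simp
  then show ?thesis using s by (simp add: perms_def)
qed

lemma E1:
  "card {\<pi> \<in> perms (2 * n). P (aw n \<pi>)} = fact n * card {a \<in> Aall n. P a}"
proof -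
  define A where "A = {a \<in> Aall n. P a}"
  define S where "S = Sigma A (\<lambda>a. permutations_of_set ({1..2*n} - set a))"
  have "bij_betw (\<lambda>\<pi>. (aw n \<pi>, bw n \<pi>)) {\<pi> \<in> perms (2 * n). P (aw n \<pi>)} S"
  proof (rule bij_betw_byWitness[where f' = "gl n"])
    show "\<forall>a\<in>{\<pi> \<in> perms (2 * n). P (aw n \<pi>)}. gl n (aw n a, bw n a) = a"
      using gl_aw_bw by auto
    show "\<forall>a'\<in>S. (aw n (gl n a'), bw n (gl n a')) = a'"
    proof
      fix ab assume "ab \<in> S"
      then obtain a b where ab: "ab = (a, b)" "a \<in> Aall n" "b \<in> permutations_of_set ({1..2*n} - set a)"
        unfolding S_def A_def by auto
      have la: "length a = n" using ab by (simp add: Aall_def)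
      have "card ({1..2*n} - set a) = n" using ab(2)
        by (simp add: Aall_def card_Diff_subset distinct_card)
      then have "length b = n" using length_finite_permutations_of_set[OF ab(3)] by simp
      then show "(aw n (gl n ab), bw n (gl n ab)) = ab" using ab la aw_gl bw_gl by auto
    qed
    show "(\<lambda>\<pi>. (aw n \<pi>, bw n \<pi>)) ` {\<pi> \<in> perms (2 * n). P (aw n \<pi>)} \<subseteq> S"
      using aw_mem bw_mem unfolding S_def A_def by auto
    show "gl n ` S \<subseteq> {\<pi> \<in> perms (2 * n). P (aw n \<pi>)}"
    proof
      fix x assume "x \<in> gl n ` S"
      then obtain a b where ab: "x = gl n (a, b)" "a \<in> A" "b \<in> permutations_of_set ({1..2*n} - set a)"
        unfolding S_def by auto
      then have "x \<in> perms (2*n)" using gl_mem A_def by auto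
      moreover have "aw n x = a" using ab aw_gl by (auto simp: A_def Aall_def)
      ultimately show "x \<in> {\<pi> \<in> perms (2 * n). P (aw n \<pi>)}" using ab A_def by auto
    qed
  qed
  then have "card {\<pi> \<in> perms (2 * n). P (aw n \<pi>)} = card S" by (rule bij_betw_same_card)
  also have "\<dots> = (\<Sum>a\<in>A. card (permutations_of_set ({1..2*n} - set a)))"
    unfolding S_def
  proof (rule card_SigmaI)
    show "finite A" unfolding A_def Aall_def
      by (rule finite_subset[OF _ finite_lists_length_eq[of "{1..2*n}" n]]) auto
  qed simp
  also have "\<dots> = (\<Sum>a\<in>A. fact n)"
  proof (rule sum.cong[OF refl])
    fix a assume "a \<in> A"
    then have "length a = n" "distinct a" "set a \<subseteq> {1..2*n}" by (auto simp: A_def Aall_def)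
    then have "card ({1..2*n} - set a) = n" by (simp add: card_Diff_subset distinct_card)
    then show "card (permutations_of_set ({1..2*n} - set a)) = fact n" by simp
  qed
  finally show ?thesis by (simp add: A_def)
qed



lemma E2:
  assumes p: "\<pi> \<in> perms (2 * n)"
  shows "card (pdv_occ p \<pi>) = card (occ p (std (filter even (aw n \<pi>))))"
proof -
  have len: "length \<pi> = 2 * n" using perms_len[OF p] .
  define os where "os = map (\<lambda>j. 2*j+1) [0..<n]"
  define ps where "ps = filter (\<lambda>i. even (\<pi> ! (i - 1))) os"
  have "sorted_wrt (<) os" unfolding os_def by (simp add: sorted_wrt_map)
  then have sp: "sorted_wrt (<) ps" unfolding ps_def by (rule sorted_wrt_filter)
  have sps: "set ps \<subseteq> {1..length \<pi>}" unfolding ps_def os_def using len by auto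
  have key: "i \<in> set ps \<longleftrightarrow> odd i \<and> even (\<pi> ! (i - 1))" if "i \<in> {1..2*n}" for i
  proof
    assume "i \<in> set ps" then show "odd i \<and> even (\<pi> ! (i - 1))"
      unfolding ps_def os_def by auto
  next
    assume a: "odd i \<and> even (\<pi> ! (i - 1))"
    then have "i = 2 * (i div 2) + 1" by presburger
    moreover have "i div 2 < n" using that a by auto presburger
    ultimately have "i \<in> set os" unfolding os_def
      by (metis (no_types, lifting) atLeastLessThan_iff image_eqI set_map set_upt zero_le)
    then show "i \<in> set ps" using a unfolding ps_def by simp
  qed
  have "pdv_occ p \<pi> = {is \<in> occ p \<pi>. set is \<subseteq> set ps}"
  proof -
    have "(\<forall>i\<in>set is. odd i \<and> even (\<pi> ! (i - 1))) \<longleftrightarrow> set is \<subseteq> set ps" if "is \<in> occ p \<pi>" for "is"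
    proof -
      have "set is \<subseteq> {1..2*n}" using that len unfolding occ_def by auto
      then show ?thesis using key by blast
    qed
    then show ?thesis unfolding pdv_occ_def by blast
  qed
  then have "card (pdv_occ p \<pi>) = card (occ p (map (\<lambda>i. \<pi> ! (i - 1)) ps))"
    using occ_restrict[OF sp sps] by simp
  also have "map (\<lambda>i. \<pi> ! (i - 1)) ps = filter even (aw n \<pi>)"
  proof -
    have "aw n \<pi> = map (\<lambda>i. \<pi> ! (i - 1)) os" unfolding aw_def os_def by simp
    then show ?thesis unfolding ps_def by (simp add: filter_map comp_def)
  qed
  also have "occ p (filter even (aw n \<pi>)) = occ p (std (filter even (aw n \<pi>)))"
  proof (rule occ_iso, rule std_iso)
    show "distinct (filter even (aw n \<pi>))" using aw_mem[OF p] by (simp add: Aall_def)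
  qed
  finally show ?thesis .
qed

lemma fiber_sum:
  assumes "finite Y" "h ` A \<subseteq> Y" "finite A"
  shows "card A = (\<Sum>y\<in>Y. card {a\<in>A. h a = y})"
proof -
  have "A = (\<Union>y\<in>Y. {a\<in>A. h a = y})" using assms(2) by auto
  then have "card A = card (\<Union>y\<in>Y. {a\<in>A. h a = y})" by simp
  also have "\<dots> = (\<Sum>y\<in>Y. card {a\<in>A. h a = y})"
    by (rule card_UN_disjoint) (use assms in auto)
  finally show ?thesis .
qed

lemma finite_perms: "finite (perms k)"
  by (simp add: perms_eq)

lemma card_Ev: "card {x\<in>{1..2*n}. even x} = (n::nat)"
proof -
  have "{x\<in>{1..2*n}. even x} = (\<lambda>j. 2*j) ` {1..n}" by (auto elim!: evenE)
  moreover have "inj_on (\<lambda>j. 2*j) {1..n::nat}" by (auto simp: inj_on_def)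
  ultimately show ?thesis by (simp add: card_image)
qed

lemma card_Od: "card {x\<in>{1..2*n}. odd x} = (n::nat)"
proof -
  have "{x\<in>{1..2*n}. odd x} = (\<lambda>j. 2*j+1) ` {0..<n}"
  proof
    show "{x\<in>{1..2*n}. odd x} \<subseteq> (\<lambda>j. 2*j+1) ` {0..<n}"
    proof
      fix x assume x: "x \<in> {x\<in>{1..2*n}. odd x}"
      then have ox: "odd x" "x \<le> 2*n" by auto
      then have "x = 2 * (x div 2) + 1" by presburger
      moreover have "x div 2 < n" using ox by presburger
      ultimately show "x \<in> (\<lambda>j. 2*j+1) ` {0..<n}" by (intro image_eqI[of _ _ "x div 2"]) auto
    qed
  qed auto
  moreover have "inj_on (\<lambda>j. 2*j+1) {0..<n::nat}" by (auto simp: inj_on_def)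
  ultimately show ?thesis by (simp add: card_image)
qed

lemma ff_binom: "k \<le> n \<Longrightarrow> ff n (n - k) = (n choose k) * fact (n - k)"
proof -
  assume k: "k \<le> n"
  have "ff n (n - k) * fact k = fact n" using ff_fact[of "n - k" n] k by simp
  also have "\<dots> = fact k * fact (n - k) * (n choose k)" using binomial_fact_lemma[OF k] by simp
  finally have "fact k * ff n (n - k) = fact k * ((n choose k) * fact (n - k))" by (simp add: algebra_simps)
  then show ?thesis by simp
qed



lemma count_A:
  fixes n m :: nat and p :: "nat list"
  defines "Q \<equiv> \<lambda>a. card (occ p (std (filter even a))) = m"
  shows "card {a \<in> Aall n. Q a} =
    (\<Sum>k = 0..n. A_count p k m * ((n choose k) * ((n choose k) * ff n (n - k))))"
proof -
  define Ev where "Ev = {x\<in>{1..2*n}. even x}"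
  define Od where "Od = {x\<in>{1..2*n}. odd x}"
  define AQ where "AQ = {a \<in> Aall n. Q a}"
  define h where "h = (\<lambda>a. (length (filter even a), std (filter even a)))"
  define Sg where "Sg = (\<lambda>k. {\<sigma> \<in> perms k. card (occ p \<sigma>) = m})"
  define Y where "Y = Sigma {0..n} Sg"
  have finAll: "finite (Aall n)" unfolding Aall_def
    by (rule finite_subset[OF _ finite_lists_length_eq[of "{1..2*n}" n]]) auto
  have finAQ: "finite AQ" unfolding AQ_def using finAll by simp
  have finSg: "finite (Sg k)" for k unfolding Sg_def using finite_perms by simp
  have finY: "finite Y" unfolding Y_def using finSg by simp
  have hY: "h ` AQ \<subseteq> Y"
  proof
    fix z assume "z \<in> h ` AQ"
    then obtain a where a: "a \<in> AQ" "z = h a" by auto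
    then have "length a = n" "distinct a" "Q a" unfolding AQ_def Aall_def by auto
    moreover have "length (filter even a) \<le> length a" by simp
    moreover have "std (filter even a) \<in> perms (length (filter even a))"
      using \<open>distinct a\<close> by (simp add: std_perm)
    ultimately show "z \<in> Y" using a unfolding Y_def Sg_def h_def Q_def by auto
  qed
  have "card AQ = (\<Sum>y\<in>Y. card {a\<in>AQ. h a = y})" by (rule fiber_sum[OF finY hY finAQ])
  also have "\<dots> = (\<Sum>k\<in>{0..n}. \<Sum>\<sigma>\<in>Sg k. card {a\<in>AQ. h a = (k, \<sigma>)})"
    unfolding Y_def by (subst sum.Sigma) (use finSg in \<open>auto simp: case_prod_unfold\<close>)
  also have "\<dots> = (\<Sum>k\<in>{0..n}. \<Sum>\<sigma>\<in>Sg k. (n choose k) * ((n choose k) * ff n (n - k)))"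
  proof (rule sum.cong[OF refl], rule sum.cong[OF refl])
    fix k \<sigma> assume k: "k \<in> {0..n}" and \<sigma>: "\<sigma> \<in> Sg k"
    have \<sigma>p: "\<sigma> \<in> perms k" and \<sigma>m: "card (occ p \<sigma>) = m" using \<sigma> unfolding Sg_def by auto
    define Fb where "Fb = {a\<in>AQ. h a = (k, \<sigma>)}"
    define W where "W = {w. length w = k \<and> distinct w \<and> set w \<subseteq> Ev \<and> std w = \<sigma>}"
    have finEv: "finite Ev" unfolding Ev_def by simp
    have finW: "finite W" unfolding W_def
      by (rule finite_subset[OF _ finite_lists_length_eq[OF finEv, of k]]) auto
    have hW: "filter even ` Fb \<subseteq> W"
    proof
      fix w assume "w \<in> filter even ` Fb"
      then obtain a where a: "a \<in> Fb" "w = filter even a" by auto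
      then have "distinct a" "set a \<subseteq> {1..2*n}" "h a = (k, \<sigma>)"
        unfolding Fb_def AQ_def Aall_def by auto
      then show "w \<in> W" using a unfolding W_def h_def Ev_def by auto
    qed
    have finFb: "finite Fb" unfolding Fb_def using finAQ by simp
    have "card Fb = (\<Sum>w\<in>W. card {a\<in>Fb. filter even a = w})"
      by (rule fiber_sum[OF finW hW finFb])
    also have "\<dots> = (\<Sum>w\<in>W. (n choose k) * ff n (n - k))"
    proof (rule sum.cong[OF refl])
      fix w assume w: "w \<in> W"
      then have wl: "length w = k" and wd: "distinct w" and wE: "set w \<subseteq> Ev" and ws: "std w = \<sigma>"
        unfolding W_def by auto
      have "{a\<in>Fb. filter even a = w} = SL n w Od"
      proof
        show "{a\<in>Fb. filter even a = w} \<subseteq> SL n w Od"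
        proof
          fix a assume a: "a \<in> {a\<in>Fb. filter even a = w}"
          then have al: "length a = n" "distinct a" "set a \<subseteq> {1..2*n}" "filter even a = w"
            unfolding Fb_def AQ_def Aall_def by auto
          have "set a \<subseteq> set w \<union> Od"
          proof
            fix x assume x: "x \<in> set a"
            show "x \<in> set w \<union> Od"
            proof (cases "even x")
              case True then show ?thesis using x al(4) by auto
            next
              case False then show ?thesis using x al(3) unfolding Od_def by auto
            qed
          qed
          then show "a \<in> SL n w Od" using al unfolding SL_def by auto
        qed
        show "SL n w Od \<subseteq> {a\<in>Fb. filter even a = w}"
        proof
          fix a assume a: "a \<in> SL n w Od"
          then have al: "length a = n" "distinct a" "set a \<subseteq> set w \<union> Od" "filter even a = w"
            unfolding SL_def by auto
          have "set w \<union> Od \<subseteq> {1..2*n}" using wE unfolding Ev_def Od_def by auto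
          then have "set a \<subseteq> {1..2*n}" using al(3) by blast
          then have "a \<in> Aall n" using al unfolding Aall_def by auto
          moreover have "Q a" using al(4) ws \<sigma>m unfolding Q_def by simp
          moreover have "h a = (k, \<sigma>)" using al(4) wl ws unfolding h_def by simp
          ultimately show "a \<in> {a\<in>Fb. filter even a = w}" using al(4) unfolding Fb_def AQ_def by auto
        qed
      qed
      moreover have "card (SL n w Od) = (n choose k) * ff (card Od) (n - k)"
      proof -
        have "finite Od" "\<forall>x\<in>Od. odd x" by (simp_all add: Od_def)
        moreover have "\<forall>x\<in>set w. even x" using wE unfolding Ev_def by blast
        ultimately have "card (SL n w Od) = (n choose length w) * ff (card Od) (n - length w)"
          using SL_card[of Od w n] wd by blast
        then show ?thesis using wl by simp
      qed
      moreover have "card Od = n" unfolding Od_def by (rule card_Od)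
      ultimately show "card {a\<in>Fb. filter even a = w} = (n choose k) * ff n (n - k)" by simp
    qed
    also have "\<dots> = card W * ((n choose k) * ff n (n - k))" by simp
    also have "card W = n choose k" unfolding W_def
    proof (rule W_fiber[OF finEv _ \<sigma>p])
      show "card Ev = n" unfolding Ev_def by (rule card_Ev)
      show "k \<le> n" using k by simp
    qed
    finally show "card {a\<in>AQ. h a = (k, \<sigma>)} = (n choose k) * ((n choose k) * ff n (n - k))"
      unfolding Fb_def .
  qed
  also have "\<dots> = (\<Sum>k = 0..n. A_count p k m * ((n choose k) * ((n choose k) * ff n (n - k))))"
    by (simp add: A_count_def Sg_def)
  finally show ?thesis unfolding AQ_def .
qed



theorem mainTheorem1:
  fixes p :: "nat list" and t n m :: nat
  assumes "t \<ge> 1" and "p \<in> perms t" and "n \<ge> 1"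
  shows "B_count p (2 * n) m =
    (\<Sum>k = 0..n. fact n * fact (n - k) * (n choose k) ^ 3 * A_count p k m)"
proof -
  have "{\<pi> \<in> perms (2 * n). card (pdv_occ p \<pi>) = m} =
        {\<pi> \<in> perms (2 * n). (\<lambda>a. card (occ p (std (filter even a))) = m) (aw n \<pi>)}"
    using E2 by auto
  then have "B_count p (2 * n) m = fact n * card {a \<in> Aall n. card (occ p (std (filter even a))) = m}"
    unfolding B_count_def using E1 by simp
  also have "\<dots> = fact n * (\<Sum>k = 0..n. A_count p k m * ((n choose k) * ((n choose k) * ff n (n - k))))"
    using count_A by simp
  also have "\<dots> = (\<Sum>k = 0..n. fact n * fact (n - k) * (n choose k) ^ 3 * A_count p k m)"
    unfolding sum_distrib_left
  proof (rule sum.cong[OF refl])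
    fix k assume "k \<in> {0..n}"
    then have "ff n (n - k) = (n choose k) * fact (n - k)" by (intro ff_binom) simp
    then show "fact n * (A_count p k m * ((n choose k) * ((n choose k) * ff n (n - k)))) =
          fact n * fact (n - k) * (n choose k) ^ 3 * A_count p k m"
      by (simp add: power3_eq_cube algebra_simps)
  qed
  finally show ?thesis .
qed

end
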